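(* Let $P,Q_1,Q_2\in K\langle\partial_t\rangle$ be monic with $P=Q_1Q_2$, and suppose $Q_2$ is semisplit. Then $P$ is semisplit if and only if $Q_1$ is semisplit.
   Context: Let $k$ be an algebraically closed field of characteristic zero and $K=k(t,x_1,\dots,x_n)$ with the commuting derivations $\partial_t=\partial/\partial t$ and $\partial_{x_i}=\partial/\partial x_i$. Let $\mathcal U$ be a universal differential extension field of $K$ (in the sense of Kolchin), with commuting derivations extending these. Set $C_t=\{c\in\mathcal U\mid\partial_t(c)=0\}$ and $C_{\mathbf x}=\{c\in\mathcal U\mid \partial_{x_i}(c)=0\text{ for all }i\}$. An element $f\in\mathcal U$ is split if $f=gh$ with $g\in C_t$, $h\in C_{\mathbf x}$, and semisplit if it is a finite sum of split elements. A nonzero operator $P\in K\langle\partial_t\rangle$ is semisplit if it is monic and all of its coefficients are semisplit. *)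

theory Defs
  imports "HOL-Computational_Algebra.Polynomial" "HOL-Algebra.Ring"
begin

text \<open>The universal differential field U is modelled by a type 'u of class
field_char_0. Derivations are indexed by nat: D 0 is the t-derivation, D i (1 \<le> i \<le> n)
is the x_i-derivation. Generators: y 0 = t, y i = x_i (1 \<le> i \<le> n).\<close>

definition is_derivation :: "('u::field \<Rightarrow> 'u) \<Rightarrow> bool" where
  "is_derivation d \<longleftrightarrow> (\<forall>a b. d (a + b) = d a + d b \<and> d (a * b) = a * d b + d a * b)"

definition comm_derivs :: "nat \<Rightarrow> (nat \<Rightarrow> 'u::field \<Rightarrow> 'u) \<Rightarrow> bool" where
  "comm_derivs n D \<longleftrightarrow> (\<forall>i\<le>n. is_derivation (D i)) \<and>
     (\<forall>i\<le>n. \<forall>j\<le>n. \<forall>a. D i (D j a) = D j (D i a))"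

definition is_subfield :: "'u::field set \<Rightarrow> bool" where
  "is_subfield F \<longleftrightarrow> 0 \<in> F \<and> 1 \<in> F \<and> (\<forall>a\<in>F. \<forall>b\<in>F. a + b \<in> F \<and> a * b \<in> F) \<and>
     (\<forall>a\<in>F. - a \<in> F \<and> inverse a \<in> F)"

definition gen_subfield :: "'u::field set \<Rightarrow> 'u set" where
  "gen_subfield S = \<Inter>{F. is_subfield F \<and> S \<subseteq> F}"

definition gen_dsubfield :: "nat \<Rightarrow> (nat \<Rightarrow> 'u::field \<Rightarrow> 'u) \<Rightarrow> 'u set \<Rightarrow> 'u set" where
  "gen_dsubfield n D S = \<Inter>{F. is_subfield F \<and> S \<subseteq> F \<and> (\<forall>i\<le>n. \<forall>a\<in>F. D i a \<in> F)}"

definition alg_closed_subfield :: "'u::field set \<Rightarrow> bool" where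
  "alg_closed_subfield k \<longleftrightarrow> is_subfield k \<and>
     (\<forall>p::'u poly. (\<forall>i. coeff p i \<in> k) \<and> degree p \<ge> 1 \<longrightarrow> (\<exists>z\<in>k. poly p z = 0))"

definition alg_indep :: "'u::field set \<Rightarrow> nat \<Rightarrow> (nat \<Rightarrow> 'u) \<Rightarrow> bool" where
  "alg_indep k n y \<longleftrightarrow> (\<forall>(A::(nat \<Rightarrow> nat) set) c. finite A \<longrightarrow> (\<forall>\<alpha>\<in>A. c \<alpha> \<in> k) \<longrightarrow>
      (\<forall>\<alpha>\<in>A. \<forall>i>n. \<alpha> i = 0) \<longrightarrow>
      (\<Sum>\<alpha>\<in>A. c \<alpha> * (\<Prod>i\<le>n. y i ^ \<alpha> i)) = 0 \<longrightarrow> (\<forall>\<alpha>\<in>A. c \<alpha> = 0))"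

text \<open>K = k(t, x_1, ..., x_n) inside U, with D i acting as the partial derivatives.\<close>
definition rational_setting ::
  "nat \<Rightarrow> (nat \<Rightarrow> 'u::field_char_0 \<Rightarrow> 'u) \<Rightarrow> 'u set \<Rightarrow> (nat \<Rightarrow> 'u) \<Rightarrow> 'u set \<Rightarrow> bool" where
  "rational_setting n D k y K \<longleftrightarrow>
     comm_derivs n D \<and> alg_closed_subfield k \<and> alg_indep k n y \<and>
     K = gen_subfield (k \<union> y ` {0..n}) \<and>
     (\<forall>i\<le>n. \<forall>a\<in>k. D i a = 0) \<and>
     (\<forall>i\<le>n. \<forall>j\<le>n. D i (y j) = (if i = j then 1 else 0))"

text \<open>Abstract differential field extensions G (field structure on a carrier inside the type 'u,
HOL-Algebra style) with derivations DG 0, ..., DG n, and an embedding e of F into G.\<close>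
definition is_dfield :: "nat \<Rightarrow> 'u ring \<Rightarrow> (nat \<Rightarrow> 'u \<Rightarrow> 'u) \<Rightarrow> bool" where
  "is_dfield n G DG \<longleftrightarrow> field G \<and>
     (\<forall>i\<le>n. \<forall>a\<in>carrier G. DG i a \<in> carrier G) \<and>
     (\<forall>i\<le>n. \<forall>a\<in>carrier G. \<forall>b\<in>carrier G.
        DG i (a \<oplus>\<^bsub>G\<^esub> b) = DG i a \<oplus>\<^bsub>G\<^esub> DG i b \<and>
        DG i (a \<otimes>\<^bsub>G\<^esub> b) = (a \<otimes>\<^bsub>G\<^esub> DG i b) \<oplus>\<^bsub>G\<^esub> (DG i a \<otimes>\<^bsub>G\<^esub> b)) \<and>
     (\<forall>i\<le>n. \<forall>j\<le>n. \<forall>a\<in>carrier G. DG i (DG j a) = DG j (DG i a))"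

definition is_dembedding ::
  "nat \<Rightarrow> (nat \<Rightarrow> 'u::field \<Rightarrow> 'u) \<Rightarrow> 'u set \<Rightarrow> 'u ring \<Rightarrow> (nat \<Rightarrow> 'u \<Rightarrow> 'u) \<Rightarrow> ('u \<Rightarrow> 'u) \<Rightarrow> bool" where
  "is_dembedding n D F G DG e \<longleftrightarrow>
     (\<forall>a\<in>F. e a \<in> carrier G) \<and> e 1 = \<one>\<^bsub>G\<^esub> \<and>
     (\<forall>a\<in>F. \<forall>b\<in>F. e (a + b) = e a \<oplus>\<^bsub>G\<^esub> e b \<and> e (a * b) = e a \<otimes>\<^bsub>G\<^esub> e b) \<and>
     (\<forall>i\<le>n. \<forall>a\<in>F. e (D i a) = DG i (e a))"

definition gen_dsubfield_G :: "nat \<Rightarrow> 'u ring \<Rightarrow> (nat \<Rightarrow> 'u \<Rightarrow> 'u) \<Rightarrow> 'u set \<Rightarrow> 'u set" where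
  "gen_dsubfield_G n G DG T = \<Inter>{H. H \<subseteq> carrier G \<and> T \<subseteq> H \<and> \<zero>\<^bsub>G\<^esub> \<in> H \<and> \<one>\<^bsub>G\<^esub> \<in> H \<and>
      (\<forall>a\<in>H. \<forall>b\<in>H. a \<oplus>\<^bsub>G\<^esub> b \<in> H \<and> a \<otimes>\<^bsub>G\<^esub> b \<in> H) \<and>
      (\<forall>a\<in>H. \<ominus>\<^bsub>G\<^esub> a \<in> H) \<and> (\<forall>a\<in>H. a \<noteq> \<zero>\<^bsub>G\<^esub> \<longrightarrow> inv\<^bsub>G\<^esub> a \<in> H) \<and>
      (\<forall>i\<le>n. \<forall>a\<in>H. DG i a \<in> H)}"

text \<open>Kolchin universality of U over K: every finitely generated differential extension G of a
differential subfield F of U finitely generated over K embeds in U over F.\<close>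
definition universal_over :: "nat \<Rightarrow> (nat \<Rightarrow> 'u::field \<Rightarrow> 'u) \<Rightarrow> 'u set \<Rightarrow> bool" where
  "universal_over n D K \<longleftrightarrow>
    (\<forall>S F G DG e T.
       finite S \<and> F = gen_dsubfield n D (K \<union> S) \<and>
       is_dfield n G DG \<and> is_dembedding n D F G DG e \<and>
       finite T \<and> T \<subseteq> carrier G \<and> carrier G = gen_dsubfield_G n G DG (e ` F \<union> T) \<longrightarrow>
       (\<exists>\<phi>. inj_on \<phi> (carrier G) \<and> \<phi> \<one>\<^bsub>G\<^esub> = 1 \<and>
          (\<forall>a\<in>carrier G. \<forall>b\<in>carrier G. \<phi> (a \<oplus>\<^bsub>G\<^esub> b) = \<phi> a + \<phi> b \<and> \<phi> (a \<otimes>\<^bsub>G\<^esub> b) = \<phi> a * \<phi> b) \<and>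
          (\<forall>i\<le>n. \<forall>a\<in>carrier G. \<phi> (DG i a) = D i (\<phi> a)) \<and>
          (\<forall>a\<in>F. \<phi> (e a) = a)))"

definition C_t :: "(nat \<Rightarrow> 'u::field \<Rightarrow> 'u) \<Rightarrow> 'u set" where
  "C_t D = {c. D 0 c = 0}"

definition C_x :: "nat \<Rightarrow> (nat \<Rightarrow> 'u::field \<Rightarrow> 'u) \<Rightarrow> 'u set" where
  "C_x n D = {c. \<forall>i\<in>{1..n}. D i c = 0}"

definition semisplit :: "nat \<Rightarrow> (nat \<Rightarrow> 'u::field \<Rightarrow> 'u) \<Rightarrow> 'u \<Rightarrow> bool" where
  "semisplit n D f \<longleftrightarrow> (\<exists>(m::nat) g h. (\<forall>j<m. g j \<in> C_t D \<and> h j \<in> C_x n D) \<and> f = (\<Sum>j<m. g j * h j))"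

text \<open>Operators a_0 + a_1 \<partial>_t + ... + a_r \<partial>_t^r are represented as polynomials with
coefficients a_i (coefficients on the left of the powers of \<partial>_t); multiplication is the
Ore product: \<partial>^i b = \<Sum>_j (i choose j) b^(j) \<partial>^(i-j).\<close>
definition ore_mult :: "('u::field \<Rightarrow> 'u) \<Rightarrow> 'u poly \<Rightarrow> 'u poly \<Rightarrow> 'u poly" where
  "ore_mult d p q = (\<Sum>i\<le>degree p. \<Sum>j\<le>i.
      smult (coeff p i * of_nat (i choose j)) (monom 1 (i - j) * map_poly (d ^^ j) q))"

definition in_K_op :: "'u::field set \<Rightarrow> 'u poly \<Rightarrow> bool" where
  "in_K_op K p \<longleftrightarrow> (\<forall>i. coeff p i \<in> K)"

definition monic_op :: "'u::field poly \<Rightarrow> bool" where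
  "monic_op p \<longleftrightarrow> lead_coeff p = 1"

definition semisplit_op :: "nat \<Rightarrow> (nat \<Rightarrow> 'u::field \<Rightarrow> 'u) \<Rightarrow> 'u poly \<Rightarrow> bool" where
  "semisplit_op n D p \<longleftrightarrow> p \<noteq> 0 \<and> monic_op p \<and> (\<forall>i. semisplit n D (coeff p i))"

end

theory Submission
  imports Defs
begin


lemma deriv_basic:
  fixes d :: "'u::field_char_0 \<Rightarrow> 'u"
  assumes "is_derivation d"
  shows "d 0 = 0" "d 1 = 0" "d (-a) = - d a" "d (a+b) = d a + d b" "d (a*b) = a * d b + d a * b"
proof -
  have h: "\<And>a b. d (a + b) = d a + d b \<and> d (a * b) = a * d b + d a * b"
    using assms unfolding is_derivation_def by blast
  show "d (a+b) = d a + d b" "d (a*b) = a * d b + d a * b" using h by auto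
  have "d (0+0) = d 0 + d 0" using h by blast
  then show d0: "d 0 = 0" by simp
  have "d (1*1) = 1 * d 1 + d 1 * 1" using h by blast
  then show "d 1 = 0" by simp
  have "d (a + -a) = d a + d (-a)" using h by blast
  then show "d (-a) = - d a" using d0 by (simp add: eq_neg_iff_add_eq_0 add.commute)
qed

lemma deriv_sum:
  fixes d :: "'u::field_char_0 \<Rightarrow> 'u"
  assumes "is_derivation d"
  shows "d (\<Sum>j\<in>A. f j) = (\<Sum>j\<in>A. d (f j))"
  by (induction A rule: infinite_finite_induct) (auto simp: deriv_basic[OF assms])

lemma deriv_nat:
  fixes d :: "'u::field_char_0 \<Rightarrow> 'u"
  assumes "is_derivation d"
  shows "d (of_nat c) = 0"
  by (induction c) (auto simp: deriv_basic[OF assms])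

context
  fixes n :: nat and D :: "nat \<Rightarrow> 'u::field_char_0 \<Rightarrow> 'u"
  assumes cd: "comm_derivs n D"
begin

lemma dD: "i \<le> n \<Longrightarrow> is_derivation (D i)"
  using cd unfolding comm_derivs_def by blast

lemma Ct_mul: "a \<in> C_t D \<Longrightarrow> b \<in> C_t D \<Longrightarrow> a * b \<in> C_t D"
  using deriv_basic[OF dD[of 0]] by (simp add: C_t_def)
lemma Ct_neg: "a \<in> C_t D \<Longrightarrow> - a \<in> C_t D"
  using deriv_basic[OF dD[of 0]] by (simp add: C_t_def)
lemma Ct_nat: "of_nat c \<in> C_t D"
  using deriv_nat[OF dD[of 0]] by (simp add: C_t_def)
lemma Cx_mul: "a \<in> C_x n D \<Longrightarrow> b \<in> C_x n D \<Longrightarrow> a * b \<in> C_x n D"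
  using deriv_basic[OF dD] by (simp add: C_x_def)
lemma Cx_one: "1 \<in> C_x n D"
  using deriv_basic[OF dD] by (simp add: C_x_def)
lemma Cx_D0: "a \<in> C_x n D \<Longrightarrow> D 0 a \<in> C_x n D"
proof -
  assume a: "a \<in> C_x n D"
  { fix i assume i: "i \<in> {1..n}"
    have "D i (D 0 a) = D 0 (D i a)" using cd i unfolding comm_derivs_def by auto
    also have "\<dots> = 0" using a i deriv_basic(1)[OF dD[of 0]] by (simp add: C_x_def)
    finally have "D i (D 0 a) = 0" . }
  then show ?thesis by (simp add: C_x_def)
qed

lemma ss_zero: "semisplit n D 0"
  unfolding semisplit_def by (rule exI[of _ 0]) simp

lemma ss_add1: "semisplit n D f \<Longrightarrow> g \<in> C_t D \<Longrightarrow> h \<in> C_x n D \<Longrightarrow> semisplit n D (f + g * h)"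
proof -
  assume "semisplit n D f" and gh: "g \<in> C_t D" "h \<in> C_x n D"
  then obtain m :: nat and G H where GH: "\<forall>j<m. G j \<in> C_t D \<and> H j \<in> C_x n D" "f = (\<Sum>j<m. G j * H j)"
    unfolding semisplit_def by blast
  show ?thesis unfolding semisplit_def
    apply (rule exI[of _ "Suc m"], rule exI[of _ "G(m:=g)"], rule exI[of _ "H(m:=h)"])
    using GH gh by (auto simp: less_Suc_eq)
qed

lemma ss_ind:
  assumes "semisplit n D f"
    and "P 0" and "\<And>f g h. P f \<Longrightarrow> g \<in> C_t D \<Longrightarrow> h \<in> C_x n D \<Longrightarrow> P (f + g * h)"
  shows "P f"
proof -
  obtain m :: nat and G H where GH: "\<forall>j<m. G j \<in> C_t D \<and> H j \<in> C_x n D" "f = (\<Sum>j<m. G j * H j)"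
    using assms(1) unfolding semisplit_def by blast
  have "\<forall>k\<le>m. P (\<Sum>j<k. G j * H j)"
  proof (intro allI impI)
    fix k assume "k \<le> m" then show "P (\<Sum>j<k. G j * H j)"
      by (induction k) (auto simp: assms(2,3) GH(1))
  qed
  then show ?thesis using GH by auto
qed

lemma ss_add: "semisplit n D a \<Longrightarrow> semisplit n D b \<Longrightarrow> semisplit n D (a + b)"
  by (erule ss_ind[of b]) (auto simp: ss_add1 add.assoc[symmetric])

lemma ss_neg: "semisplit n D a \<Longrightarrow> semisplit n D (- a)"
  by (erule ss_ind) (auto simp: ss_zero intro!: ss_add1[of _ "- _", simplified] Ct_neg)

lemma ss_scale:
  assumes "semisplit n D a" "g \<in> C_t D" "h \<in> C_x n D" shows "semisplit n D (g * h * a)"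
proof (rule ss_ind[of a "\<lambda>a. semisplit n D (g*h*a)", OF assms(1)])
  show "semisplit n D (g * h * 0)" by (simp add: ss_zero)
next
  fix f g' h' assume 2: "semisplit n D (g * h * f)" "g' \<in> C_t D" "h' \<in> C_x n D"
  have "g * h * (f + g' * h') = g * h * f + (g * g') * (h * h')" by (simp add: algebra_simps)
  then show "semisplit n D (g * h * (f + g' * h'))" using 2 ss_add1 Ct_mul Cx_mul assms by metis
qed

lemma ss_mul: "semisplit n D a \<Longrightarrow> semisplit n D b \<Longrightarrow> semisplit n D (a * b)"
  by (erule ss_ind[of a]) (auto simp: ss_zero distrib_right intro: ss_add ss_scale)

lemma ss_nat: "semisplit n D (of_nat c)"
  using ss_add1[OF ss_zero Ct_nat[of c] Cx_one] by simp

lemma ss_D0: "semisplit n D a \<Longrightarrow> semisplit n D (D 0 a)"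
  by (erule ss_ind) (auto simp: ss_zero deriv_basic[OF dD[of 0]] C_t_def
      intro!: ss_add1 Cx_D0)

end


definition oterm :: "('u::field \<Rightarrow> 'u) \<Rightarrow> 'u poly \<Rightarrow> 'u poly \<Rightarrow> nat \<Rightarrow> nat \<Rightarrow> nat \<Rightarrow> 'u" where
  "oterm d p q m i j = coeff p i * of_nat (i choose j) *
     (if i - j \<le> m then coeff (map_poly (d ^^ j) q) (m - (i - j)) else 0)"

lemma ore_ext:
  assumes "degree p \<le> N"
  shows "ore_mult d p q = (\<Sum>i\<le>N. \<Sum>j\<le>i.
      smult (coeff p i * of_nat (i choose j)) (monom 1 (i - j) * map_poly (d ^^ j) q))"
  unfolding ore_mult_def
  by (rule sum.mono_neutral_left) (use assms in \<open>auto simp: coeff_eq_0\<close>)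

lemma ore_coeff:
  assumes "degree p \<le> N"
  shows "coeff (ore_mult d p q) m = (\<Sum>i\<le>N. \<Sum>j\<le>i. oterm d p q m i j)"
  unfolding ore_ext[OF assms] oterm_def
  by (auto simp: coeff_sum coeff_monom_mult intro!: sum.cong)

lemma ore_coeff_diff:
  "coeff (ore_mult d (p1 - p2) q) m = coeff (ore_mult d p1 q) m - coeff (ore_mult d p2 q) m"
proof -
  let ?N = "max (degree p1) (max (degree p2) (degree (p1 - p2)))"
  show ?thesis
    unfolding ore_coeff[of "p1 - p2" ?N, OF max.cobounded2[THEN order.trans[OF max.cobounded2]]]
       ore_coeff[of p1 ?N, OF max.cobounded1] ore_coeff[of p2 ?N, OF max.cobounded2[THEN order.trans[OF max.cobounded1]]]
    by (simp add: oterm_def algebra_simps sum_subtractf)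
qed

lemma ore_top:
  "coeff (ore_mult d p q) (degree p + degree q) = lead_coeff p * lead_coeff q"
proof -
  let ?r = "degree p" and ?s = "degree q"
  have z: "oterm d p q (?r + ?s) i j = 0" if "i \<le> ?r" "j \<le> i" "(i, j) \<noteq> (?r, 0)" for i j
  proof -
    have "i - j < ?r" using that by auto
    then have "?r + ?s - (i - j) > degree (map_poly (d ^^ j) q)"
      using map_poly_degree_leq[of "d ^^ j" q] by linarith
    then show ?thesis unfolding oterm_def by (simp add: coeff_eq_0)
  qed
  have inner: "(\<Sum>j\<le>i. oterm d p q (?r + ?s) i j) = (if i = ?r then oterm d p q (?r + ?s) ?r 0 else 0)"
    if "i \<le> ?r" for i
  proof (cases "i = ?r")
    case True
    have "(\<Sum>j\<le>i. oterm d p q (?r + ?s) i j) = oterm d p q (?r + ?s) i 0 + (\<Sum>j\<in>{..i} - {0}. oterm d p q (?r + ?s) i j)"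
      by (subst sum.remove[of _ 0]) auto
    also have "(\<Sum>j\<in>{..i} - {0}. oterm d p q (?r + ?s) i j) = 0"
      by (rule sum.neutral) (use z True in auto)
    finally show ?thesis using True by simp
  next
    case False
    then show ?thesis using z that by (auto intro!: sum.neutral)
  qed
  have "coeff (ore_mult d p q) (?r + ?s) = (\<Sum>i\<le>?r. \<Sum>j\<le>i. oterm d p q (?r + ?s) i j)"
    by (rule ore_coeff) simp
  also have "\<dots> = (\<Sum>i\<le>?r. if i = ?r then oterm d p q (?r + ?s) ?r 0 else 0)"
    by (rule sum.cong) (auto simp: inner)
  also have "\<dots> = oterm d p q (?r + ?s) ?r 0" by simp
  also have "\<dots> = lead_coeff p * lead_coeff q" by (simp add: oterm_def map_poly_idI)
  finally show ?thesis .
qed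

lemma sum_in: "(\<And>x. x \<in> A \<Longrightarrow> f x \<in> S) \<Longrightarrow> 0 \<in> S \<Longrightarrow> (\<And>a b. a \<in> S \<Longrightarrow> b \<in> S \<Longrightarrow> a + b \<in> S)
  \<Longrightarrow> sum f A \<in> S"
  by (induction A rule: infinite_finite_induct) auto

locale dring =
  fixes S :: "'u::field set" and d :: "'u \<Rightarrow> 'u"
  assumes S0: "0 \<in> S" and Sadd: "a \<in> S \<Longrightarrow> b \<in> S \<Longrightarrow> a + b \<in> S"
    and Smul: "a \<in> S \<Longrightarrow> b \<in> S \<Longrightarrow> a * b \<in> S"
    and Sneg: "a \<in> S \<Longrightarrow> - a \<in> S" and Snat: "of_nat c \<in> S"
    and Sd: "a \<in> S \<Longrightarrow> d a \<in> S" and d0: "d 0 = 0"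
begin

lemma Sdiff: "a \<in> S \<Longrightarrow> b \<in> S \<Longrightarrow> a - b \<in> S"
  using Sadd Sneg by (metis diff_conv_add_uminus)

lemma dpow0: "(d ^^ j) 0 = 0"
  by (induction j) (auto simp: d0)

lemma dpowS: "a \<in> S \<Longrightarrow> (d ^^ j) a \<in> S"
  by (induction j) (auto simp: Sd)

lemma fwd:
  assumes "\<forall>i. coeff p i \<in> S" "\<forall>i. coeff q i \<in> S"
  shows "coeff (ore_mult d p q) m \<in> S"
  unfolding ore_coeff[of p "degree p", OF order_refl]
  by (intro sum_in S0 Sadd) (auto simp: oterm_def coeff_map_poly dpow0 assms Smul Snat dpowS S0)

lemma bwd:
  assumes q: "\<forall>i. coeff q i \<in> S" "lead_coeff q = 1"
    and pq: "\<forall>m. coeff (ore_mult d p q) m \<in> S"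
  shows "\<forall>i. coeff p i \<in> S"
  using pq
proof (induction "degree p" arbitrary: p rule: less_induct)
  case less
  define r where "r = degree p"
  define c where "c = lead_coeff p"
  have cS: "c \<in> S" using ore_top[of d p q] less.prems q unfolding c_def by (metis mult.right_neutral)
  have mS: "\<forall>i. coeff (monom c r) i \<in> S" using cS S0 by (simp add: coeff_monom)
  define p' where "p' = p - monom c r"
  have p'S: "\<forall>m. coeff (ore_mult d p' q) m \<in> S"
    unfolding p'_def ore_coeff_diff using less.prems fwd[OF mS q(1)] Sdiff by blast
  have deg: "degree p' \<le> r"
    by (rule degree_le) (auto simp: p'_def coeff_monom r_def coeff_eq_0)
  have cr: "coeff p' r = 0" by (simp add: p'_def c_def r_def)
  have "\<forall>i. coeff p' i \<in> S"
  proof (cases "p' = 0")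
    case True then show ?thesis using S0 by simp
  next
    case False
    then have "degree p' \<noteq> r" using cr by auto
    then have "degree p' < degree p" using deg r_def by simp
    then show ?thesis using less.hyps p'S by blast
  qed
  moreover have "p = p' + monom c r" by (simp add: p'_def)
  ultimately show ?case using mS Sadd by (metis coeff_add)
qed

end

theorem mainTheorem10:
  fixes n :: nat and D :: "nat \<Rightarrow> 'u::field_char_0 \<Rightarrow> 'u"
    and k K :: "'u set" and y :: "nat \<Rightarrow> 'u"
    and P Q1 Q2 :: "'u poly"
  assumes "rational_setting n D k y K"
    and "universal_over n D K"
    and "in_K_op K P" and "in_K_op K Q1" and "in_K_op K Q2"
    and "monic_op P" and "monic_op Q1" and "monic_op Q2"
    and "P = ore_mult (D 0) Q1 Q2"
    and "semisplit_op n D Q2"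
  shows "semisplit_op n D P \<longleftrightarrow> semisplit_op n D Q1"
proof -
  have cd: "comm_derivs n D" using assms(1) unfolding rational_setting_def by blast
  interpret dr: dring "{f. semisplit n D f}" "D 0"
    apply unfold_locales
    using ss_zero[OF cd] ss_add[OF cd] ss_mul[OF cd] ss_neg[OF cd] ss_nat[OF cd] ss_D0[OF cd]
      deriv_basic(1)[OF dD[OF cd, of 0]] by auto
  have q2: "\<forall>i. coeff Q2 i \<in> {f. semisplit n D f}" "lead_coeff Q2 = 1"
    using assms(10) unfolding semisplit_op_def monic_op_def by auto
  have P0: "P \<noteq> 0" and Q10: "Q1 \<noteq> 0"
    using assms(6,7) unfolding monic_op_def by auto
  show ?thesis
  proof
    assume "semisplit_op n D P"
    then have "\<forall>m. coeff (ore_mult (D 0) Q1 Q2) m \<in> {f. semisplit n D f}"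
      using assms(9) unfolding semisplit_op_def by auto
    then have "\<forall>i. coeff Q1 i \<in> {f. semisplit n D f}" using dr.bwd q2 by blast
    then show "semisplit_op n D Q1" using Q10 assms(7) unfolding semisplit_op_def by auto
  next
    assume "semisplit_op n D Q1"
    then have "\<forall>i. coeff Q1 i \<in> {f. semisplit n D f}" unfolding semisplit_op_def by auto
    then have "\<forall>m. coeff P m \<in> {f. semisplit n D f}" using dr.fwd q2 assms(9) by blast
    then show "semisplit_op n D P" using P0 assms(6) unfolding semisplit_op_def by auto
  qed
qed

end
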